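(* Let $n\ge 2$ and $w\in\widetilde{S}_n^\circ$ with gap vector $\dot g(w)=(g_1,\dots,g_{n-1})$. Then the Coxeter length of $w$ is \[\ell(w)=\sum_{i=1}^{n-1}(n-i)\,g_i = g_{n-1}+2g_{n-2}+\cdots+(n-1)g_1 .\]
   Context: An affine permutation of size $n$ is a bijection $w:\mathbb{Z}\to\mathbb{Z}$ with $w(i+n)=w(i)+n$ for all $i$ and $w(1)+\cdots+w(n)=\binom{n+1}{2}$; $[w(1),\dots,w(n)]$ is its base window. The affine symmetric group $\widetilde{S}_n$ is the group of these under composition. It is generated by $s_0,\dots,s_{n-1}$, where $ws_i$ is obtained from $w$ by swapping the values at positions $i+mn$ and $i+1+mn$ for every $m\in\mathbb{Z}$; the Coxeter length $\ell(w)$ is the minimal number of such generators in a factorization of $w$. Let $\widetilde{S}_n^\circ$ be the set of $w\in\widetilde{S}_n$ with $w(1)<w(2)<\cdots<w(n)$ (minimal length coset representatives). For $w\in\widetilde{S}_n^\circ$ with base window $w_1<\cdots<w_n$, call an integer a bead if it equals $w_j-mn$ for some $1\le j\le n$ and some integer $m\ge 0$, and a gap otherwise. The gap vector is $\dot g(w)=(g_1,\dots,g_{n-1})$, where $g_i$ is the number of gaps strictly between $w_i$ and $w_{i+1}$. *)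

theory Defs
  imports Main
begin

definition affine_perm :: "nat \<Rightarrow> (int \<Rightarrow> int) \<Rightarrow> bool" where
  "affine_perm n w \<longleftrightarrow> bij w \<and> (\<forall>i. w (i + int n) = w i + int n)
     \<and> (\<Sum>i\<in>{1..int n}. w i) = int ((n + 1) choose 2)"

definition affine_gen :: "nat \<Rightarrow> nat \<Rightarrow> int \<Rightarrow> int" where
  "affine_gen n i = (\<lambda>j. if j mod int n = int i mod int n then j + 1
                         else if j mod int n = (int i + 1) mod int n then j - 1
                         else j)"

definition gen_word :: "nat \<Rightarrow> nat list \<Rightarrow> int \<Rightarrow> int" where
  "gen_word n is = foldr (\<lambda>i f. affine_gen n i \<circ> f) is id"

definition coxeter_length :: "nat \<Rightarrow> (int \<Rightarrow> int) \<Rightarrow> nat" where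
  "coxeter_length n w = (LEAST k. \<exists>is. length is = k \<and> set is \<subseteq> {0..<n} \<and> gen_word n is = w)"

text \<open>Minimal length coset representatives: increasing base window.\<close>
definition affine_grass :: "nat \<Rightarrow> (int \<Rightarrow> int) \<Rightarrow> bool" where
  "affine_grass n w \<longleftrightarrow> affine_perm n w \<and> (\<forall>i\<in>{1..<int n}. w i < w (i + 1))"

definition is_bead :: "nat \<Rightarrow> (int \<Rightarrow> int) \<Rightarrow> int \<Rightarrow> bool" where
  "is_bead n w x \<longleftrightarrow> (\<exists>j\<in>{1..int n}. \<exists>m::int. m \<ge> 0 \<and> x = w j - m * int n)"

definition gap_count :: "nat \<Rightarrow> (int \<Rightarrow> int) \<Rightarrow> nat \<Rightarrow> nat" where
  "gap_count n w i = card {x. w (int i) < x \<and> x < w (int i + 1) \<and> \<not> is_bead n w x}"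

end

theory Submission
  imports Defs
begin



definition Fd :: "nat \<Rightarrow> int \<Rightarrow> int" where "Fd n x = \<bar>x div int n\<bar>"

lemma Fd_neg:
  assumes "n > 0" "\<not> int n dvd x"
  shows "Fd n (- x) = Fd n x + (if x < 0 then -1 else 1)"
proof -
  have m: "x mod int n \<noteq> 0" using assms by (simp add: dvd_eq_mod_eq_0)
  have d: "(- x) div int n = - (x div int n) - 1" using m assms by (simp add: zdiv_zminus1_eq_if)
  have "x < 0 \<longleftrightarrow> x div int n < 0" using assms by (simp add: pos_imp_zdiv_neg_iff)
  then show ?thesis unfolding Fd_def d by auto
qed

lemma Fd_shift:
  assumes "n > 0" "\<not> int n dvd x"
  shows "Fd n (x + int n) = Fd n (- x)"
proof -
  have m: "x mod int n \<noteq> 0" using assms by (simp add: dvd_eq_mod_eq_0)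
  have d: "(- x) div int n = - (x div int n) - 1" using m assms by (simp add: zdiv_zminus1_eq_if)
  have e: "(x + int n) div int n = x div int n + 1" using assms by (simp add: div_add_self2)
  show ?thesis unfolding Fd_def d e by auto
qed

lemma Fd_shift2:
  assumes "n > 0" "\<not> int n dvd x"
  shows "Fd n (x + 2 * int n) = Fd n (- x) + (if x < - int n then -1 else 1)"
proof -
  have m: "x mod int n \<noteq> 0" using assms by (simp add: dvd_eq_mod_eq_0)
  have d: "(- x) div int n = - (x div int n) - 1" using m assms by (simp add: zdiv_zminus1_eq_if)
  have e: "(x + 2 * int n) div int n = x div int n + 2" using assms div_mult_self1[of "int n" x 2] by simp
  have e1: "(x + int n) div int n = x div int n + 1" using assms by (simp add: div_add_self2)
  have "x < - int n \<longleftrightarrow> x + int n < 0" by auto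
  also have "\<dots> \<longleftrightarrow> (x + int n) div int n < 0" using assms by (simp add: pos_imp_zdiv_neg_iff)
  finally have "x < - int n \<longleftrightarrow> x div int n < -1" unfolding e1 by linarith
  then show ?thesis unfolding Fd_def d e by auto
qed




definition per :: "nat \<Rightarrow> (int\<Rightarrow>int) \<Rightarrow> bool" where
 "per n w \<longleftrightarrow> inj w \<and> (\<forall>i. w (i + int n) = w i + int n)"

lemma per_mult:
  assumes "\<forall>i. w (i + int n) = w i + int n"
  shows "w (i + m * int n) = w i + m * int n"
proof (induct m rule: int_induct[where k=0])
  case base then show ?case by simp
next
  case (step1 m)
  have "w (i + (m+1)*int n) = w ((i + m*int n) + int n)" by (simp add: algebra_simps)
  also have "\<dots> = w (i + m*int n) + int n" using assms by blast
  also have "\<dots> = w i + (m+1) * int n" using step1 by (simp add: algebra_simps)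
  finally show ?case .
next
  case (step2 m)
  have "w (i + m*int n) = w ((i + (m-1)*int n) + int n)" by (simp add: algebra_simps)
  also have "\<dots> = w (i + (m-1)*int n) + int n" using assms by blast
  finally show ?case using step2 by (simp add: algebra_simps)
qed

lemma per_nondvd:
  assumes "per n w" "n > 0" "i \<in> {1..int n}" "j \<in> {1..int n}" "i \<noteq> j"
  shows "\<not> int n dvd (w j - w i)"
proof
  assume "int n dvd (w j - w i)"
  then obtain m where m: "w j - w i = m * int n" by (auto simp: dvd_def algebra_simps)
  have "w (i + m * int n) = w i + m * int n" using assms(1) per_mult unfolding per_def by blast
  also have "\<dots> = w j" using m by simp
  finally have "i + m * int n = j" using assms(1) unfolding per_def inj_def by blast
  hence jm: "j - i = m * int n" by simp
  show False
  proof (cases "m = 0")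
    case True then show False using jm assms by simp
  next
    case False
    then have "m \<ge> 1 \<or> m \<le> -1" by linarith
    then show False
    proof
      assume "m \<ge> 1"
      have "int n \<le> m * int n" using \<open>m \<ge> 1\<close> mult_right_mono[of 1 m "int n"] by simp
      then show False using jm assms(3,4) by simp
    next
      assume "m \<le> -1"
      have "m * int n \<le> - int n" using \<open>m \<le> -1\<close> mult_right_mono[of m "-1" "int n"] by simp
      then show False using jm assms(3,4) by simp
    qed
  qed
qed

lemma mod_range: "i \<in> {1..int n} \<Longrightarrow> i mod int n = (if i = int n then 0 else i)"
  by auto

lemma ag_per: "affine_gen n k (j + int n) = affine_gen n k j + int n"
  unfolding affine_gen_def by auto

lemma ag_invol:
  assumes "n \<ge> 2" "k < n"
  shows "affine_gen n k (affine_gen n k j) = j"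
proof -
  let ?N = "int n"
  have km: "int k mod ?N = int k" using assms by auto
  have ne: "(int k + 1) mod ?N \<noteq> int k mod ?N"
    using assms by (cases "int k + 1 = ?N") auto
  have a: "(j + 1) mod ?N = (j mod ?N + 1) mod ?N" by (simp add: mod_simps)
  have b: "(j - 1) mod ?N = (j mod ?N - 1) mod ?N" by (simp add: mod_simps)
  show ?thesis
  proof (cases "j mod ?N = int k mod ?N")
    case True
    have "(j+1) mod ?N = (int k + 1) mod ?N" using True a km by (simp add: mod_simps)
    then show ?thesis using True ne unfolding affine_gen_def by auto
  next
    case False
    note F = False
    show ?thesis
    proof (cases "j mod ?N = (int k + 1) mod ?N")
      case True
      have "(j-1) mod ?N = (int k + 1 - 1) mod ?N" using True b by (simp add: mod_simps)
      then have "(j-1) mod ?N = int k mod ?N" by simp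
      then show ?thesis using True F unfolding affine_gen_def by auto
    next
      case False
      then show ?thesis using F unfolding affine_gen_def by auto
    qed
  qed
qed

lemma ag_inj: "n \<ge> 2 \<Longrightarrow> k < n \<Longrightarrow> inj (affine_gen n k)"
  by (metis ag_invol injI)

lemma per_comp_ag:
  assumes "n \<ge> 2" "k < n" "per n w" shows "per n (w \<circ> affine_gen n k)"
  using assms unfolding per_def by (auto simp: ag_per inj_compose ag_inj)

lemma foldr_comp: "foldr (\<lambda>i f. g i \<circ> f) xs h = foldr (\<lambda>i f. g i \<circ> f) xs id \<circ> h"
  by (induct xs) (auto simp: comp_assoc)

lemma gen_word_snoc: "gen_word n (xs @ [k]) = gen_word n xs \<circ> affine_gen n k"
  unfolding gen_word_def using foldr_comp[of "affine_gen n" xs "affine_gen n k \<circ> id"] by simp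

lemma gen_word_per:
  assumes "n \<ge> 2" "set xs \<subseteq> {0..<n}" shows "per n (gen_word n xs)"
  using assms(2)
proof (induct xs rule: rev_induct)
  case Nil then show ?case by (simp add: gen_word_def per_def)
next
  case (snoc x xs) then show ?case using assms(1) per_comp_ag[of n x "gen_word n xs"] by (simp add: gen_word_snoc del: comp_apply)
qed

lemma ag_val_pos:
  assumes "n \<ge> 2" "1 \<le> k" "k < n" "i \<in> {1..int n}"
  shows "affine_gen n k i = (if i = int k then i+1 else if i = int k+1 then i-1 else i)"
proof -
  have km: "int k mod int n = int k" using assms by auto
  have k1: "(int k + 1) mod int n = (if int k + 1 = int n then 0 else int k + 1)" using assms by auto
  show ?thesis unfolding affine_gen_def km k1 mod_range[OF assms(4)] using assms by auto
qed

lemma ag_val_zero: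
  assumes "n \<ge> 2" "i \<in> {1..int n}"
  shows "affine_gen n 0 i = (if i = int n then i+1 else if i = 1 then i-1 else i)"
proof -
  have k1: "1 mod int n = 1" using assms by auto
  show ?thesis unfolding affine_gen_def k1 mod_range[OF assms(2)] using assms by auto
qed




definition Pairs :: "int \<Rightarrow> (int\<times>int) set" where
  "Pairs m = {(i,j). 1 \<le> i \<and> i < j \<and> j \<le> m}"

lemma finite_Pairs: "finite (Pairs m)"
  by (rule finite_subset[of _ "{1..m}\<times>{1..m}"]) (auto simp: Pairs_def)

definition Phi :: "nat \<Rightarrow> (int \<Rightarrow> int) \<Rightarrow> int" where
  "Phi n w = (\<Sum>(i,j)\<in>Pairs (int n). Fd n (w j - w i))"

lemma Phi_step_pos:
  assumes n: "n \<ge> 2" and pw: "per n w" and k: "1 \<le> k" "k < n"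
  shows "Phi n (w \<circ> affine_gen n k) = Phi n w + (if w (int k + 1) < w (int k) then -1 else 1)"
proof -
  define N where "N = int n"
  define K where "K = int k"
  define \<tau> where "\<tau> i = (if i = K then K+1 else if i = K+1 then K else i)" for i
  have wv: "(w \<circ> affine_gen n k) i = w (\<tau> i)" if "i \<in> {1..N}" for i
    using ag_val_pos[OF n k, of i] that unfolding \<tau>_def N_def K_def by auto
  define Q where "Q = Pairs N - {(K,K+1)}"
  have mem: "(K,K+1) \<in> Pairs N" using k unfolding Pairs_def K_def N_def by auto
  have PQ: "Pairs N = insert (K,K+1) Q" using mem unfolding Q_def by auto
  have fQ: "finite Q" unfolding Q_def using finite_Pairs by auto
  have nQ: "(K,K+1) \<notin> Q" unfolding Q_def by auto
  have "Phi n (w \<circ> affine_gen n k) = (\<Sum>(i,j)\<in>Pairs N. Fd n (w (\<tau> j) - w (\<tau> i)))"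
    unfolding Phi_def N_def[symmetric]
    by (rule sum.cong) (auto simp: Pairs_def wv simp del: comp_apply)
  also have "\<dots> = Fd n (w K - w (K+1)) + (\<Sum>(i,j)\<in>Q. Fd n (w (\<tau> j) - w (\<tau> i)))"
    unfolding PQ using fQ nQ by (simp add: \<tau>_def)
  also have "(\<Sum>(i,j)\<in>Q. Fd n (w (\<tau> j) - w (\<tau> i))) = (\<Sum>(i,j)\<in>Q. Fd n (w j - w i))"
    by (rule sum.reindex_bij_witness[where i="\<lambda>(a,b). (\<tau> a, \<tau> b)" and j="\<lambda>(a,b). (\<tau> a, \<tau> b)"])
       (use k in \<open>auto simp: Q_def Pairs_def \<tau>_def K_def N_def split: if_splits\<close>)
  finally have A: "Phi n (w \<circ> affine_gen n k) = Fd n (w K - w (K+1)) + (\<Sum>(i,j)\<in>Q. Fd n (w j - w i))" .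
  have B: "Phi n w = Fd n (w (K+1) - w K) + (\<Sum>(i,j)\<in>Q. Fd n (w j - w i))"
    unfolding Phi_def N_def[symmetric] PQ using fQ nQ by simp
  have nd: "\<not> int n dvd (w (K+1) - w K)"
    using per_nondvd[OF pw, of K "K+1"] k unfolding K_def by auto
  have "Fd n (- (w (K+1) - w K)) = Fd n (w (K+1) - w K) + (if w (K+1) - w K < 0 then -1 else 1)"
    using Fd_neg[OF _ nd] n by auto
  then show ?thesis unfolding A B K_def[symmetric] by auto
qed

lemma Phi_step_zero:
  assumes n: "n \<ge> 2" and pw: "per n w"
  shows "Phi n (w \<circ> affine_gen n 0) = Phi n w + (if w 1 < w 0 then -1 else 1)"
proof -
  define N where "N = int n"
  have N2: "N \<ge> 2" using n unfolding N_def by auto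
  have w0: "w 0 = w N - N" using pw unfolding per_def N_def by (metis add_0 add_diff_cancel_right')
  have wN1: "w (N+1) = w 1 + N" using pw unfolding per_def N_def by (metis add.commute)
  have wv: "(w \<circ> affine_gen n 0) i = (if i = N then w 1 + N else if i = 1 then w N - N else w i)"
    if "i \<in> {1..N}" for i
    using ag_val_zero[OF n, of i] that w0 wN1 unfolding N_def by auto
  define \<sigma> where "\<sigma> p = (if fst p = 1 then (snd p, N) else if snd p = N then (1, fst p) else p)" for p :: "int\<times>int"
  define Q where "Q = Pairs N - {(1,N)}"
  have mem: "(1,N) \<in> Pairs N" using N2 unfolding Pairs_def by auto
  have PQ: "Pairs N = insert (1,N) Q" using mem unfolding Q_def by auto
  have fQ: "finite Q" unfolding Q_def using finite_Pairs by auto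
  have nQ: "(1,N) \<notin> Q" unfolding Q_def by auto
  have ndv: "\<not> int n dvd (w j - w i)" if "i \<in> {1..N}" "j \<in> {1..N}" "i \<noteq> j" for i j
    using per_nondvd[OF pw _ that[unfolded N_def]] n by auto
  have inv: "\<sigma> (\<sigma> p) = p" if "p \<in> Q" for p
    using that unfolding \<sigma>_def Q_def Pairs_def by auto
  have memQ: "\<sigma> p \<in> Q" if "p \<in> Q" for p
    using that unfolding \<sigma>_def Q_def Pairs_def by auto
  define g where "g = (\<lambda>(i,j). Fd n ((w \<circ> affine_gen n 0) j - (w \<circ> affine_gen n 0) i))"
  have "Phi n (w \<circ> affine_gen n 0) = sum g (Pairs N)"
    unfolding Phi_def N_def[symmetric] g_def ..
  also have "\<dots> = g (1,N) + sum g Q" unfolding PQ using fQ nQ by simp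
  also have "sum g Q = (\<Sum>(i,j)\<in>Q. Fd n (w j - w i))"
  proof (rule sum.reindex_bij_witness[where i=\<sigma> and j=\<sigma>])
    fix p assume p: "p \<in> Q"
    then obtain a b where ab: "p = (a,b)" "1 \<le> a" "a < b" "b \<le> N" "(a,b) \<noteq> (1,N)"
      unfolding Q_def Pairs_def by auto
    show "\<sigma> (\<sigma> p) = p" using ab unfolding \<sigma>_def by auto
    show "\<sigma> p \<in> Q" using ab unfolding \<sigma>_def Q_def Pairs_def by auto
    show "(case \<sigma> p of (i,j) \<Rightarrow> Fd n (w j - w i)) = g p"
    proof (cases "a = 1")
      case True
      have "b \<noteq> N" using ab True by auto
      hence "g p = Fd n ((w b - w N) + int n)" using ab True unfolding g_def
        by (simp add: wv del: comp_apply) (simp add: N_def algebra_simps)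
      also have "\<dots> = Fd n (- (w b - w N))"
        using Fd_shift[OF _ ndv[of N b]] ab n True by auto
      finally show ?thesis using ab True unfolding \<sigma>_def by simp
    next
      case False
      note F = False
      show ?thesis
      proof (cases "b = N")
        case True
        have "g p = Fd n ((w 1 - w a) + int n)" using ab True F unfolding g_def
          by (simp add: wv del: comp_apply) (simp add: N_def algebra_simps)
        also have "\<dots> = Fd n (- (w 1 - w a))"
          using Fd_shift[OF _ ndv[of a 1]] ab n F by auto
        finally show ?thesis using ab True F unfolding \<sigma>_def by simp
      next
        case False
        then show ?thesis using ab F unfolding g_def \<sigma>_def by (simp add: wv del: comp_apply)
      qed
    qed
  qed (use inv memQ in auto)
  finally have A: "Phi n (w \<circ> affine_gen n 0) = g (1,N) + (\<Sum>(i,j)\<in>Q. Fd n (w j - w i))" .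
  have B: "Phi n w = Fd n (w N - w 1) + (\<Sum>(i,j)\<in>Q. Fd n (w j - w i))"
    unfolding Phi_def N_def[symmetric] PQ using fQ nQ by simp
  have "g (1,N) = Fd n ((w 1 - w N) + 2 * int n)" unfolding g_def using N2
    by (simp add: wv del: comp_apply) (simp add: N_def algebra_simps)
  also have "\<dots> = Fd n (- (w 1 - w N)) + (if w 1 - w N < - int n then -1 else 1)"
    using Fd_shift2[OF _ ndv[of N 1]] n N2 by auto
  finally have "g (1,N) = Fd n (w N - w 1) + (if w 1 < w 0 then -1 else 1)"
    using w0 unfolding N_def by auto
  then show ?thesis unfolding A B by simp
qed

lemma Phi_step:
  assumes n: "n \<ge> 2" and pw: "per n w" and k: "k < n"
  shows "Phi n (w \<circ> affine_gen n k) = Phi n w + (if w (int k + 1) < w (int k) then -1 else 1)"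
  using Phi_step_pos[OF n pw _ k] Phi_step_zero[OF n pw] by (cases "k = 0") auto




lemma Phi_nonneg: "Phi n w \<ge> 0"
  unfolding Phi_def Fd_def by (rule sum_nonneg) auto

lemma Phi_id: "Phi n id = 0"
  unfolding Phi_def Fd_def by (rule sum.neutral) (auto simp: Pairs_def)

lemma Phi_id': "Phi n (\<lambda>x. x) = 0"
  using Phi_id unfolding id_def .

lemma Phi_le:
  assumes "n \<ge> 2" "set xs \<subseteq> {0..<n}"
  shows "Phi n (gen_word n xs) \<le> int (length xs)"
  using assms(2)
proof (induct xs rule: rev_induct)
  case Nil then show ?case by (simp add: gen_word_def Phi_id')
next
  case (snoc x xs)
  then have p: "per n (gen_word n xs)" using gen_word_per assms(1) by auto
  show ?case using snoc Phi_step[OF assms(1) p, of x] by (simp add: gen_word_snoc del: comp_apply)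
qed

lemma adj_mono:
  fixes f :: "int \<Rightarrow> int"
  assumes "\<forall>k. a \<le> k \<and> k < b \<longrightarrow> f k < f (k+1)" "a \<le> i" "i \<le> j" "j \<le> b"
  shows "f i + (j - i) \<le> f j"
proof -
  have "j \<le> b \<longrightarrow> f i + (j-i) \<le> f j" using \<open>i \<le> j\<close>
  proof (induct j rule: int_ge_induct)
    case base then show ?case by simp
  next
    case (step j)
    show ?case
    proof
      assume "j + 1 \<le> b"
      then have "f i + (j - i) \<le> f j" "f j < f (j+1)" using step assms(1,2) by auto
      then show "f i + (j + 1 - i) \<le> f (j + 1)" by linarith
    qed
  qed
  then show ?thesis using assms by auto
qed

lemma no_descent_Phi:
  assumes n: "n \<ge> 2" and pw: "per n w" and nd: "\<forall>k<n. \<not> w (int k + 1) < w (int k)"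
  shows "Phi n w = 0"
proof -
  have inc: "\<forall>k. 0 \<le> k \<and> k < int n \<longrightarrow> w k < w (k+1)"
  proof (intro allI impI)
    fix k :: int assume k: "0 \<le> k \<and> k < int n"
    define k' where "k' = nat k"
    have k': "k = int k'" "k' < n" using k unfolding k'_def by auto
    have "w k \<le> w (k+1)" using nd k' by auto
    moreover have "w k \<noteq> w (k+1)" using pw injD[of w k "k+1"] unfolding per_def by auto
    ultimately show "w k < w (k+1)" by auto
  qed
  have w0: "w 0 + int n = w (int n)" using pw unfolding per_def by (metis add_0)
  show ?thesis unfolding Phi_def
  proof (rule sum.neutral, clarify)
    fix i j assume ij: "(i,j) \<in> Pairs (int n)"
    then have ij': "1 \<le> i" "i < j" "j \<le> int n" by (auto simp: Pairs_def)
    have "w i + (j - i) \<le> w j" using adj_mono[OF inc, of i j] ij' by auto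
    moreover have "w 0 + (1 - 0) \<le> w 1" using adj_mono[OF inc, of 0 1] ij' by auto
    moreover have "w 1 + (i - 1) \<le> w i" using adj_mono[OF inc, of 1 i] ij' by auto
    moreover have "w j + (int n - j) \<le> w (int n)" using adj_mono[OF inc, of j "int n"] ij' by auto
    ultimately have "0 \<le> w j - w i \<and> w j - w i < int n" using w0 ij' by linarith
    then show "Fd n (w j - w i) = 0" unfolding Fd_def by simp
  qed
qed




definition Ssum :: "nat \<Rightarrow> (int \<Rightarrow> int) \<Rightarrow> int" where
  "Ssum n w = (\<Sum>i\<in>{1..int n}. w i)"

lemma sum_two:
  assumes "finite A" "a \<in> A" "b \<in> A" "a \<noteq> b"
  shows "sum f A = f a + f b + sum f (A - {a,b})"
proof -
  have "sum f A = f a + sum f (A - {a})" using assms by (simp add: sum.remove)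
  also have "sum f (A - {a}) = f b + sum f (A - {a} - {b})" using assms by (intro sum.remove) auto
  also have "A - {a} - {b} = A - {a,b}" by auto
  finally show ?thesis by (simp add: add.assoc)
qed

lemma Ssum_step:
  assumes n: "n \<ge> 2" and pw: "per n w" and k: "k < n"
  shows "Ssum n (w \<circ> affine_gen n k) = Ssum n w"
proof (cases "k = 0")
  case True
  define N where "N = int n"
  have w0: "w 0 = w N - N" using pw unfolding per_def N_def by (metis add_0 add_diff_cancel_right')
  have wN1: "w (N+1) = w 1 + N" using pw unfolding per_def N_def by (metis add.commute)
  have wv: "(w \<circ> affine_gen n 0) i = (if i = N then w 1 + N else if i = 1 then w N - N else w i)"
    if "i \<in> {1..N}" for i
    using ag_val_zero[OF n, of i] that w0 wN1 unfolding N_def by auto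
  have N2: "N \<ge> 2" using n N_def by auto
  have "Ssum n (w \<circ> affine_gen n 0) = (w \<circ> affine_gen n 0) 1 + (w \<circ> affine_gen n 0) N
     + sum (w \<circ> affine_gen n 0) ({1..N} - {1,N})"
    unfolding Ssum_def N_def[symmetric] using N2 by (intro sum_two) auto
  also have "sum (w \<circ> affine_gen n 0) ({1..N} - {1,N}) = sum w ({1..N} - {1,N})"
    by (rule sum.cong) (auto simp: wv simp del: comp_apply)
  also have "Ssum n w = w 1 + w N + sum w ({1..N} - {1,N})"
    unfolding Ssum_def N_def[symmetric] using N2 by (intro sum_two) auto
  ultimately show ?thesis using N2 True by (simp add: wv del: comp_apply)
next
  case False
  define N where "N = int n"
  define K where "K = int k"
  have k1: "1 \<le> k" using False by auto
  have wv: "(w \<circ> affine_gen n k) i = (if i = K then w (K+1) else if i = K+1 then w K else w i)"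
    if "i \<in> {1..N}" for i
    using ag_val_pos[OF n k1 k, of i] that unfolding N_def K_def by auto
  have KN: "1 \<le> K" "K + 1 \<le> N" using k k1 unfolding K_def N_def by auto
  have "Ssum n (w \<circ> affine_gen n k) = (w \<circ> affine_gen n k) K + (w \<circ> affine_gen n k) (K+1)
     + sum (w \<circ> affine_gen n k) ({1..N} - {K,K+1})"
    unfolding Ssum_def N_def[symmetric] using KN by (intro sum_two) auto
  also have "sum (w \<circ> affine_gen n k) ({1..N} - {K,K+1}) = sum w ({1..N} - {K,K+1})"
    by (rule sum.cong) (auto simp: wv simp del: comp_apply)
  also have "Ssum n w = w K + w (K+1) + sum w ({1..N} - {K,K+1})"
    unfolding Ssum_def N_def[symmetric] using KN by (intro sum_two) auto
  ultimately show ?thesis using KN by (simp add: wv del: comp_apply)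
qed

lemma choose2_step: "(Suc n + 1) choose 2 = ((n + 1) choose 2) + Suc n"
proof -
  have "(Suc n + 1) choose 2 = Suc (Suc n) choose Suc 1" by (simp add: numeral_2_eq_2)
  also have "\<dots> = (Suc n choose 1) + (Suc n choose Suc 1)" by (rule binomial_Suc_Suc)
  also have "Suc n choose Suc 1 = (n + 1) choose 2" by (simp add: numeral_2_eq_2)
  finally show ?thesis by simp
qed

lemma gauss_int: "(\<Sum>i\<in>{1..int n}. i) = int ((n + 1) choose 2)"
proof (induct n)
  case 0 then show ?case by simp
next
  case (Suc n)
  have e: "{1..int (Suc n)} = insert (int n + 1) {1..int n}" by auto
  have "(\<Sum>i\<in>{1..int (Suc n)}. i) = (int n + 1) + (\<Sum>i\<in>{1..int n}. i)" unfolding e by simp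
  also have "\<dots> = int (Suc n) + int ((n+1) choose 2)" using Suc by simp
  also have "\<dots> = int ((Suc n + 1) choose 2)" unfolding choose2_step by simp
  finally show ?case .
qed




lemma Phi_zero_id:
  assumes n: "n \<ge> 2" and pw: "per n w" and S: "Ssum n w = int ((n + 1) choose 2)"
    and P: "Phi n w = 0"
  shows "w = id"
proof -
  define N where "N = int n"
  have N2: "N \<ge> 2" using n N_def by auto
  have nn: "0 \<le> (case p of (i,j) \<Rightarrow> Fd n (w j - w i))" for p
    by (auto simp: Fd_def split: prod.splits)
  have eq: "(\<Sum>p\<in>Pairs N. (case p of (i,j) \<Rightarrow> Fd n (w j - w i))) = 0 \<longleftrightarrow>
      (\<forall>p\<in>Pairs N. (case p of (i,j) \<Rightarrow> Fd n (w j - w i)) = 0)"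
    by (rule sum_nonneg_eq_0_iff[OF finite_Pairs]) (rule nn)
  have all0: "\<forall>p\<in>Pairs N. (case p of (i,j) \<Rightarrow> Fd n (w j - w i)) = 0"
    using P eq unfolding Phi_def N_def[symmetric] by blast
  have rng: "0 \<le> w j - w i \<and> w j - w i < N" if "(i,j) \<in> Pairs N" for i j
  proof -
    have "Fd n (w j - w i) = 0" using all0 that by fastforce
    then have "(w j - w i) div N = 0" unfolding Fd_def N_def by simp
    then show ?thesis using N2 zdiv_eq_0_iff[of "w j - w i" N] by linarith
  qed
  have inc: "\<forall>k. 1 \<le> k \<and> k < N \<longrightarrow> w k < w (k+1)"
  proof (intro allI impI)
    fix k assume k: "1 \<le> k \<and> k < N"
    then have "w k \<le> w (k+1)" using rng[of k "k+1"] by (auto simp: Pairs_def)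
    moreover have "w k \<noteq> w (k+1)" using pw injD[of w k "k+1"] unfolding per_def by auto
    ultimately show "w k < w (k+1)" by auto
  qed
  have top: "w N - w 1 < N" using rng[of 1 N] N2 by (auto simp: Pairs_def)
  have val: "w i = w 1 + (i - 1)" if "i \<in> {1..N}" for i
  proof -
    have "w 1 + (i - 1) \<le> w i" using adj_mono[OF inc, of 1 i] that by auto
    moreover have "w i + (N - i) \<le> w N" using adj_mono[OF inc, of i N] that by auto
    ultimately show ?thesis using top by linarith
  qed
  have "Ssum n w = (\<Sum>i\<in>{1..N}. i + (w 1 - 1))"
    unfolding Ssum_def N_def[symmetric]
  proof (rule sum.cong)
    fix i assume "i \<in> {1..N}"
    from val[OF this] show "w i = i + (w 1 - 1)" by linarith
  qed simp
  also have "\<dots> = (\<Sum>i\<in>{1..N}. i) + N * (w 1 - 1)"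
    by (simp add: sum.distrib N_def)
  finally have "N * (w 1 - 1) = 0" using S gauss_int[of n] unfolding N_def by linarith
  then have w1: "w 1 = 1" using N2 by simp
  have win: "w i = i" if "i \<in> {1..N}" for i using val[OF that] w1 by linarith
  show ?thesis
  proof
    fix j
    define r where "r = (j - 1) mod N + 1"
    define m where "m = (j - 1) div N"
    have "0 \<le> (j-1) mod N" "(j-1) mod N < N" using N2 by simp_all
    then have r: "r \<in> {1..N}" unfolding r_def by auto
    have "j - 1 = N * m + (j-1) mod N" unfolding m_def by simp
    then have j: "j = r + m * N" unfolding r_def by (simp add: algebra_simps)
    have "w (r + m * N) = w r + m * N" using pw per_mult[of w n r m] unfolding per_def N_def by blast
    then have "w j = w r + m * N" using j by simp
    then show "w j = id j" using win[OF r] j by simp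
  qed
qed




lemma upper:
  assumes n: "n \<ge> 2"
  shows "per n w \<Longrightarrow> Ssum n w = int ((n + 1) choose 2) \<Longrightarrow> Phi n w = int m \<Longrightarrow>
    \<exists>xs. length xs = m \<and> set xs \<subseteq> {0..<n} \<and> gen_word n xs = w"
proof (induct m arbitrary: w)
  case 0
  then have "w = id" using Phi_zero_id[OF n] by auto
  then show ?case by (intro exI[of _ "[]"]) (simp add: gen_word_def)
next
  case (Suc m)
  have "\<exists>k<n. w (int k + 1) < w (int k)"
    using no_descent_Phi[OF n Suc(2)] Suc(4) by auto
  then obtain k where k: "k < n" "w (int k + 1) < w (int k)" by auto
  define w' where "w' = w \<circ> affine_gen n k"
  have p': "per n w'" unfolding w'_def using per_comp_ag[OF n k(1) Suc(2)] .
  have s': "Ssum n w' = int ((n + 1) choose 2)" unfolding w'_def using Ssum_step[OF n Suc(2) k(1)] Suc(3) by simp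
  have f': "Phi n w' = int m" unfolding w'_def using Phi_step[OF n Suc(2) k(1)] Suc(4) k(2) by simp
  obtain xs where xs: "length xs = m" "set xs \<subseteq> {0..<n}" "gen_word n xs = w'" using Suc(1)[OF p' s' f'] by blast
  have "gen_word n (xs @ [k]) = w' \<circ> affine_gen n k" by (simp add: gen_word_snoc xs)
  also have "\<dots> = w" unfolding w'_def by (rule ext) (simp add: ag_invol[OF n k(1)])
  finally show ?case using xs k by (intro exI[of _ "xs @ [k]"]) auto
qed

lemma coxeter_length_Phi:
  assumes n: "n \<ge> 2" and a: "affine_perm n w"
  shows "int (coxeter_length n w) = Phi n w"
proof -
  have pw: "per n w" using a unfolding affine_perm_def per_def by (auto simp: bij_is_inj)
  have S: "Ssum n w = int ((n + 1) choose 2)" using a unfolding affine_perm_def Ssum_def by auto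
  obtain m where m: "Phi n w = int m" using Phi_nonneg[of n w] zero_le_imp_eq_int by blast
  obtain xs where xs: "length xs = m" "set xs \<subseteq> {0..<n}" "gen_word n xs = w"
    using upper[OF n pw S m] by blast
  have "coxeter_length n w = m"
    unfolding coxeter_length_def
  proof (rule Least_equality)
    show "\<exists>ws. length ws = m \<and> set ws \<subseteq> {0..<n} \<and> gen_word n ws = w" using xs by blast
  next
    fix y assume "\<exists>ws. length ws = y \<and> set ws \<subseteq> {0..<n} \<and> gen_word n ws = w"
    then obtain ws where "length ws = y" "set ws \<subseteq> {0..<n}" "gen_word n ws = w" by blast
    then show "m \<le> y" using Phi_le[OF n, of "ws"] m by auto
  qed
  then show ?thesis using m by simp
qed




definition Gp :: "nat \<Rightarrow> (int \<Rightarrow> int) \<Rightarrow> int \<Rightarrow> int \<Rightarrow> int set" where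
  "Gp n w a b = {x. a < x \<and> x < b \<and> \<not> is_bead n w x}"

definition Tset :: "nat \<Rightarrow> (int \<Rightarrow> int) \<Rightarrow> int \<Rightarrow> int \<Rightarrow> int set" where
  "Tset n w k j = {x. w k < x \<and> x < w j \<and> int n dvd (x - w k)}"

definition PhiM :: "nat \<Rightarrow> (int \<Rightarrow> int) \<Rightarrow> int \<Rightarrow> int" where
  "PhiM n w M = (\<Sum>(i,j)\<in>Pairs M. Fd n (w j - w i))"

locale grass =
  fixes n :: nat and w :: "int \<Rightarrow> int"
  assumes n2: "n \<ge> 2" and ag: "affine_grass n w"
begin

abbreviation "N \<equiv> int n"

lemma N2: "N \<ge> 2" using n2 by simp

lemma pw: "per n w" using ag unfolding affine_grass_def affine_perm_def per_def by (auto simp: bij_is_inj)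

lemma sw: "surj w" using ag unfolding affine_grass_def affine_perm_def by (auto simp: bij_is_surj)

lemma adj: "\<forall>k. 1 \<le> k \<and> k < N \<longrightarrow> w k < w (k+1)"
  using ag unfolding affine_grass_def by auto

lemma incr: "1 \<le> i \<Longrightarrow> i < j \<Longrightarrow> j \<le> N \<Longrightarrow> w i < w j"
  using adj_mono[OF adj, of i j] by auto

lemma nd: "i \<in> {1..N} \<Longrightarrow> j \<in> {1..N} \<Longrightarrow> i \<noteq> j \<Longrightarrow> \<not> N dvd (w j - w i)"
  using per_nondvd[OF pw] n2 by auto

lemma resid: "\<exists>r\<in>{1..N}. N dvd (x - w r)"
proof -
  obtain y where y: "w y = x" using sw by (metis surjD)
  define r where "r = (y - 1) mod N + 1"
  define m where "m = (y - 1) div N"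
  have "0 \<le> (y-1) mod N" "(y-1) mod N < N" using N2 by simp_all
  then have r: "r \<in> {1..N}" unfolding r_def by auto
  have "y - 1 = N * m + (y-1) mod N" unfolding m_def by simp
  then have yy: "y = r + m * N" unfolding r_def by (simp add: algebra_simps)
  have "w (r + m * N) = w r + m * N" using pw per_mult[of w n r m] unfolding per_def by blast
  then have "x - w r = m * N" using y yy by simp
  then show ?thesis using r by (intro bexI[of _ r]) auto
qed

lemma bead_iff: "is_bead n w x \<longleftrightarrow> (\<exists>j\<in>{1..N}. N dvd (w j - x) \<and> x \<le> w j)"
proof
  assume "is_bead n w x"
  then obtain j m where "j \<in> {1..N}" "m \<ge> 0" "x = w j - m * N" unfolding is_bead_def by blast
  then show "\<exists>j\<in>{1..N}. N dvd (w j - x) \<and> x \<le> w j" by (intro bexI[of _ j]) auto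
next
  assume "\<exists>j\<in>{1..N}. N dvd (w j - x) \<and> x \<le> w j"
  then obtain j where j: "j \<in> {1..N}" "N dvd (w j - x)" "x \<le> w j" by blast
  then obtain m where m: "w j - x = N * m" by (auto simp: dvd_def)
  have "m \<ge> 0"
  proof (rule ccontr)
    assume "\<not> m \<ge> 0"
    then have "N * m < 0" using N2 by (simp add: mult_pos_neg)
    then show False using m j by simp
  qed
  then show "is_bead n w x" unfolding is_bead_def using j m
    by (intro bexI[of _ j] exI[of _ m]) (auto simp: algebra_simps)
qed

lemma same_resid: "i \<in> {1..N} \<Longrightarrow> j \<in> {1..N} \<Longrightarrow> N dvd (x - w i) \<Longrightarrow> N dvd (x - w j) \<Longrightarrow> i = j"
proof (rule ccontr)
  assume a: "i \<in> {1..N}" "j \<in> {1..N}" "N dvd (x - w i)" "N dvd (x - w j)" "i \<noteq> j"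
  have "N dvd ((x - w i) - (x - w j))" using a(3,4) by (rule dvd_diff)
  then have "N dvd (w j - w i)" by simp
  then show False using nd a by blast
qed

lemma card_T:
  assumes "1 \<le> k" "k < j" "j \<le> N"
  shows "finite (Tset n w k j) \<and> int (card (Tset n w k j)) = (w j - w k) div N"
proof -
  define d where "d = w j - w k"
  define q where "q = d div N"
  have dpos: "d > 0" using incr assms unfolding d_def by auto
  have ndv: "\<not> N dvd d" using nd[of k j] assms unfolding d_def by auto
  have q0: "q \<ge> 0" unfolding q_def using dpos N2 by (simp add: pos_imp_zdiv_nonneg_iff)
  have dec: "d = q * N + d mod N" unfolding q_def by simp
  have r0: "d mod N \<noteq> 0" using ndv by (simp add: dvd_eq_mod_eq_0)
  have r1: "0 \<le> d mod N" "d mod N < N" using N2 by simp_all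
  have r: "0 < d mod N" "d mod N < N" using r0 r1 by linarith+
  have eq: "Tset n w k j = (\<lambda>m. w k + m * N) ` {1..q}"
  proof (intro set_eqI iffI)
    fix x assume "x \<in> Tset n w k j"
    then have x: "w k < x" "x < w j" "N dvd (x - w k)" unfolding Tset_def by auto
    then obtain m where m: "x - w k = m * N" by (auto simp: dvd_def algebra_simps)
    have "m \<ge> 1"
    proof (rule ccontr)
      assume "\<not> m \<ge> 1" then have "m \<le> 0" by simp
      then have "m * N \<le> 0" using N2 by (simp add: mult_nonpos_nonneg)
      then show False using m x by simp
    qed
    moreover have "m \<le> q"
    proof (rule ccontr)
      assume "\<not> m \<le> q" then have "q + 1 \<le> m" by simp
      then have "(q+1) * N \<le> m * N" using N2 by (intro mult_right_mono) auto
      then show False using m x dec r unfolding d_def by (simp add: algebra_simps)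
    qed
    ultimately show "x \<in> (\<lambda>m. w k + m * N) ` {1..q}" using m by (intro image_eqI[of _ _ m]) auto
  next
    fix x assume "x \<in> (\<lambda>m. w k + m * N) ` {1..q}"
    then obtain m where m: "1 \<le> m" "m \<le> q" "x = w k + m * N" by auto
    have "1 * N \<le> m * N" using m N2 by (intro mult_right_mono) auto
    moreover have "m * N \<le> q * N" using m N2 by (intro mult_right_mono) auto
    ultimately have "w k < x" "x < w j" using m dec r unfolding d_def by linarith+
    moreover have "N dvd (x - w k)" using m by simp
    ultimately show "x \<in> Tset n w k j" unfolding Tset_def by auto
  qed
  have inj: "inj_on (\<lambda>m. w k + m * N) {1..q}" using N2 by (auto simp: inj_on_def)
  have "card (Tset n w k j) = nat q" unfolding eq using card_image[OF inj] by simp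
  then show ?thesis using q0 eq unfolding q_def d_def by auto
qed

lemma Gp_union:
  assumes "1 \<le> m" "m + 1 \<le> N"
  shows "Gp n w (w 1) (w (m+1)) = (\<Union>k\<in>{1..m}. Tset n w k (m+1))"
proof (intro set_eqI iffI)
  fix x assume "x \<in> Gp n w (w 1) (w (m+1))"
  then have x: "w 1 < x" "x < w (m+1)" "\<not> is_bead n w x" unfolding Gp_def by auto
  obtain r where r: "r \<in> {1..N}" "N dvd (x - w r)" using resid by blast
  have "w r < x"
  proof (rule ccontr)
    assume "\<not> w r < x"
    then have "is_bead n w x" unfolding bead_iff using r
      by (intro bexI[of _ r]) (auto simp: dvd_diff_commute)
    then show False using x by simp
  qed
  moreover have "r \<le> m"
  proof (rule ccontr)
    assume "\<not> r \<le> m"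
    then have "w (m+1) \<le> w r" using incr[of "m+1" r] r assms by (cases "r = m+1") auto
    then show False using \<open>w r < x\<close> x by simp
  qed
  ultimately show "x \<in> (\<Union>k\<in>{1..m}. Tset n w k (m+1))" unfolding Tset_def using r x by auto
next
  fix x assume "x \<in> (\<Union>k\<in>{1..m}. Tset n w k (m+1))"
  then obtain k where k: "k \<in> {1..m}" "w k < x" "x < w (m+1)" "N dvd (x - w k)" unfolding Tset_def by auto
  have "w 1 \<le> w k" using incr[of 1 k] k assms by (cases "k = 1") auto
  moreover have "\<not> is_bead n w x"
  proof
    assume "is_bead n w x"
    then obtain j where j: "j \<in> {1..N}" "N dvd (w j - x)" "x \<le> w j" unfolding bead_iff by blast
    have "N dvd (x - w j)" using j by (simp add: dvd_diff_commute)
    then have "j = k" using same_resid[of j k x] j k assms by auto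
    then show False using j k by simp
  qed
  ultimately show "x \<in> Gp n w (w 1) (w (m+1))" unfolding Gp_def using k by auto
qed

lemma card_Gp_T:
  assumes "1 \<le> m" "m + 1 \<le> N"
  shows "finite (Gp n w (w 1) (w (m+1))) \<and>
    int (card (Gp n w (w 1) (w (m+1)))) = (\<Sum>k\<in>{1..m}. (w (m+1) - w k) div N)"
proof -
  have fin: "\<forall>k\<in>{1..m}. finite (Tset n w k (m+1))" using card_T assms by auto
  have disj: "\<forall>k\<in>{1..m}. \<forall>k'\<in>{1..m}. k \<noteq> k' \<longrightarrow> Tset n w k (m+1) \<inter> Tset n w k' (m+1) = {}"
    using same_resid assms unfolding Tset_def by fastforce
  have "card (\<Union>k\<in>{1..m}. Tset n w k (m+1)) = (\<Sum>k\<in>{1..m}. card (Tset n w k (m+1)))"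
    by (rule card_UN_disjoint) (use fin disj in auto)
  then have "int (card (Gp n w (w 1) (w (m+1)))) = (\<Sum>k\<in>{1..m}. int (card (Tset n w k (m+1))))"
    unfolding Gp_union[OF assms] by simp
  also have "\<dots> = (\<Sum>k\<in>{1..m}. (w (m+1) - w k) div N)"
    by (rule sum.cong) (use card_T assms in auto)
  finally show ?thesis unfolding Gp_union[OF assms] using fin by auto
qed

end




context grass begin

lemma Gp_finite: "finite (Gp n w a b)"
  by (rule finite_subset[of _ "{a<..<b}"]) (auto simp: Gp_def)

lemma Gp_split:
  assumes "1 \<le> M" "M + 1 \<le> N"
  shows "card (Gp n w (w 1) (w (M+1))) = card (Gp n w (w 1) (w M)) + card (Gp n w (w M) (w (M+1)))"
proof -
  have bead: "is_bead n w (w M)" unfolding bead_iff using assms by (intro bexI[of _ M]) auto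
  have w1M: "w 1 \<le> w M" using incr[of 1 M] assms by (cases "M = 1") auto
  have wM: "w M < w (M+1)" using incr[of M "M+1"] assms by auto
  have "Gp n w (w 1) (w (M+1)) = Gp n w (w 1) (w M) \<union> Gp n w (w M) (w (M+1))"
  proof -
    have neq: "\<And>x. \<not> is_bead n w x \<Longrightarrow> x \<noteq> w M" using bead by auto
    show ?thesis
    proof (rule set_eqI)
      fix x show "x \<in> Gp n w (w 1) (w (M+1)) \<longleftrightarrow> x \<in> Gp n w (w 1) (w M) \<union> Gp n w (w M) (w (M+1))"
        unfolding Gp_def using neq[of x] w1M wM by auto
    qed
  qed
  moreover have "Gp n w (w 1) (w M) \<inter> Gp n w (w M) (w (M+1)) = {}"
    unfolding Gp_def by auto
  ultimately show ?thesis by (simp add: card_Un_disjoint Gp_finite)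
qed

lemma gap_Gp: "gap_count n w i = card (Gp n w (w (int i)) (w (int i + 1)))"
  unfolding gap_count_def Gp_def ..

lemma G_sum:
  "m \<le> n - 1 \<Longrightarrow> card (Gp n w (w 1) (w (int m + 1))) = (\<Sum>i=1..m. gap_count n w i)"
proof (induct m)
  case 0
  have "Gp n w (w 1) (w (int 0 + 1)) = {}" by (auto simp: Gp_def)
  then show ?case by simp
next
  case (Suc m)
  define M where "M = int m + 1"
  have M: "1 \<le> M" "M + 1 \<le> N" using Suc n2 unfolding M_def by auto
  have e: "int (Suc m) + 1 = M + 1" unfolding M_def by simp
  have "card (Gp n w (w 1) (w (int (Suc m) + 1))) = card (Gp n w (w 1) (w M)) + card (Gp n w (w M) (w (M+1)))"
    unfolding e by (rule Gp_split[OF M])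
  also have "card (Gp n w (w 1) (w M)) = (\<Sum>i=1..m. gap_count n w i)" using Suc unfolding M_def by simp
  also have "card (Gp n w (w M) (w (M+1))) = gap_count n w (Suc m)" unfolding gap_Gp M_def by (simp add: ac_simps)
  finally show ?case by simp
qed

lemma PhiM_step:
  assumes "1 \<le> M" "M + 1 \<le> N"
  shows "PhiM n w (M+1) = PhiM n w M + int (card (Gp n w (w 1) (w (M+1))))"
proof -
  have P: "Pairs (M+1) = Pairs M \<union> (\<lambda>k. (k, M+1)) ` {1..M}" unfolding Pairs_def by auto
  have D: "Pairs M \<inter> (\<lambda>k. (k, M+1)) ` {1..M} = {}" unfolding Pairs_def by auto
  have inj: "inj_on (\<lambda>k. (k, M+1)) {1..M}" by (auto simp: inj_on_def)
  have "PhiM n w (M+1) = PhiM n w M + (\<Sum>p\<in>(\<lambda>k. (k, M+1)) ` {1..M}. (case p of (i,j) \<Rightarrow> Fd n (w j - w i)))"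
    unfolding PhiM_def P by (rule sum.union_disjoint) (auto simp: finite_Pairs D)
  also have "(\<Sum>p\<in>(\<lambda>k. (k, M+1)) ` {1..M}. (case p of (i,j) \<Rightarrow> Fd n (w j - w i)))
      = (\<Sum>k\<in>{1..M}. Fd n (w (M+1) - w k))"
    by (subst sum.reindex[OF inj]) simp
  also have "\<dots> = (\<Sum>k\<in>{1..M}. (w (M+1) - w k) div N)"
  proof (rule sum.cong)
    fix k assume k: "k \<in> {1..M}"
    have "w k < w (M+1)" using incr[of k "M+1"] k assms by auto
    then have "0 \<le> (w (M+1) - w k) div N" using N2 by (simp add: pos_imp_zdiv_nonneg_iff)
    then show "Fd n (w (M+1) - w k) = (w (M+1) - w k) div N" unfolding Fd_def by simp
  qed simp
  also have "\<dots> = int (card (Gp n w (w 1) (w (M+1))))" using card_Gp_T[OF assms] by simp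
  finally show ?thesis .
qed

lemma nat_sum_id:
  "(\<Sum>i=1..m. (m+1-i) * g i) + (\<Sum>i=1..Suc m. g i) = (\<Sum>i=1..Suc m. (Suc m + 1 - i) * (g i :: nat))"
proof -
  have "(\<Sum>i=1..Suc m. (Suc m + 1 - i) * g i) = (\<Sum>i=1..Suc m. (m + 1 - i) * g i + g i)"
    by (rule sum.cong) (auto simp: Suc_diff_le algebra_simps)
  also have "\<dots> = (\<Sum>i=1..Suc m. (m + 1 - i) * g i) + (\<Sum>i=1..Suc m. g i)"
    by (rule sum.distrib)
  also have "(\<Sum>i=1..Suc m. (m + 1 - i) * g i) = (\<Sum>i=1..m. (m + 1 - i) * g i)"
    by simp
  finally show ?thesis by simp
qed

lemma PhiM_formula:
  "m \<le> n - 1 \<Longrightarrow> PhiM n w (int m + 1) = int (\<Sum>i=1..m. (m + 1 - i) * gap_count n w i)"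
proof (induct m)
  case 0
  have "Pairs 1 = {}" unfolding Pairs_def by auto
  then show ?case by (simp add: PhiM_def)
next
  case (Suc m)
  define M where "M = int m + 1"
  have M: "1 \<le> M" "M + 1 \<le> N" using Suc n2 unfolding M_def by auto
  have e: "int (Suc m) + 1 = M + 1" unfolding M_def by simp
  have "PhiM n w (int (Suc m) + 1) = PhiM n w M + int (card (Gp n w (w 1) (w (M+1))))"
    unfolding e by (rule PhiM_step[OF M])
  also have "PhiM n w M = int (\<Sum>i=1..m. (m + 1 - i) * gap_count n w i)"
    using Suc unfolding M_def by simp
  also have "card (Gp n w (w 1) (w (M+1))) = (\<Sum>i=1..Suc m. gap_count n w i)"
    using G_sum[of "Suc m"] Suc(2) unfolding e by simp
  finally have "PhiM n w (int (Suc m) + 1) = int (\<Sum>i=1..m. (m + 1 - i) * gap_count n w i) + int (\<Sum>i=1..Suc m. gap_count n w i)" .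
  also have "\<dots> = int ((\<Sum>i=1..m. (m + 1 - i) * gap_count n w i) + (\<Sum>i=1..Suc m. gap_count n w i))"
    by (simp only: of_nat_add)
  also have "(\<Sum>i=1..m. (m + 1 - i) * gap_count n w i) + (\<Sum>i=1..Suc m. gap_count n w i) = (\<Sum>i=1..Suc m. (Suc m + 1 - i) * gap_count n w i)"
    by (rule nat_sum_id)
  finally show ?case .
qed

lemma Phi_formula: "Phi n w = int (\<Sum>i=1..n-1. (n - i) * gap_count n w i)"
proof -
  have "Phi n w = PhiM n w (int (n-1) + 1)" unfolding Phi_def PhiM_def using n2 by (simp add: of_nat_diff)
  also have "\<dots> = int (\<Sum>i=1..n-1. (n - 1 + 1 - i) * gap_count n w i)" by (rule PhiM_formula) simp
  also have "n - 1 + 1 = n" using n2 by simp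
  finally show ?thesis .
qed

end

theorem mainTheorem1:
  fixes n :: nat and w :: "int \<Rightarrow> int"
  assumes "n \<ge> 2" and "affine_grass n w"
  shows "coxeter_length n w = (\<Sum>i=1..n-1. (n - i) * gap_count n w i)"
proof -
  interpret grass n w using assms by unfold_locales
  have "affine_perm n w" using assms(2) unfolding affine_grass_def by simp
  then have "int (coxeter_length n w) = Phi n w" using coxeter_length_Phi[OF assms(1)] by simp
  also have "\<dots> = int (\<Sum>i=1..n-1. (n - i) * gap_count n w i)" by (rule Phi_formula)
  finally show ?thesis by (simp only: of_nat_eq_iff)
qed



end
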